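(* Let $G=(V,E)$ be a finite, undirected, unweighted, 2-vertex-connected graph with $n=|V|$ vertices. Suppose $T$ is a minimum spanning tree of $G$ and $C_T$ is a simple cycle in $G$ whose vertex set contains every vertex that has odd degree in $T$. Then $G$ has a TSP tour of length at most $4n/3$.
   Context: A TSP tour of $G$ (graph-TSP, i.e. TSP in the shortest-path metric of $G$) is a closed walk in $G$ that visits every vertex at least once; its length is the number of edges traversed, counted with multiplicity. Since $G$ is unweighted, every spanning tree of $G$ is a minimum spanning tree. The cycle $C_T$ may contain arbitrarily many vertices of even degree in $T$. *)

theory Defs
  imports Complex_Main
begin

definition graph :: "'a set \<Rightarrow> 'a set set \<Rightarrow> bool" where
  "graph V E \<longleftrightarrow> finite V \<and> (\<forall>e\<in>E. e \<subseteq> V \<and> card e = 2)"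

definition walk :: "'a set \<Rightarrow> 'a set set \<Rightarrow> 'a list \<Rightarrow> bool" where
  "walk V E xs \<longleftrightarrow> xs \<noteq> [] \<and> set xs \<subseteq> V \<and>
     (\<forall>i. Suc i < length xs \<longrightarrow> {xs ! i, xs ! Suc i} \<in> E)"

definition walk_length :: "'a list \<Rightarrow> nat" where
  "walk_length xs = length xs - 1"

definition connected_graph :: "'a set \<Rightarrow> 'a set set \<Rightarrow> bool" where
  "connected_graph V E \<longleftrightarrow>
     (\<forall>u\<in>V. \<forall>v\<in>V. \<exists>xs. walk V E xs \<and> hd xs = u \<and> last xs = v)"

definition two_vertex_connected :: "'a set \<Rightarrow> 'a set set \<Rightarrow> bool" where
  "two_vertex_connected V E \<longleftrightarrow> card V > 2 \<and> connected_graph V E \<and>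
     (\<forall>v\<in>V. connected_graph (V - {v}) {e\<in>E. v \<notin> e})"

definition simple_cycle :: "'a set \<Rightarrow> 'a set set \<Rightarrow> 'a list \<Rightarrow> bool" where
  "simple_cycle V E cs \<longleftrightarrow> length cs \<ge> 3 \<and> distinct cs \<and> walk V E cs \<and>
     {last cs, hd cs} \<in> E"

definition acyclic_graph :: "'a set \<Rightarrow> 'a set set \<Rightarrow> bool" where
  "acyclic_graph V E \<longleftrightarrow> \<not> (\<exists>cs. simple_cycle V E cs)"

definition spanning_tree :: "'a set \<Rightarrow> 'a set set \<Rightarrow> 'a set set \<Rightarrow> bool" where
  "spanning_tree V E T \<longleftrightarrow> T \<subseteq> E \<and> connected_graph V T \<and> acyclic_graph V T"

text \<open>Minimum spanning tree for unit edge weights (weight = number of edges).\<close>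

definition min_spanning_tree :: "'a set \<Rightarrow> 'a set set \<Rightarrow> 'a set set \<Rightarrow> bool" where
  "min_spanning_tree V E T \<longleftrightarrow> spanning_tree V E T \<and>
     (\<forall>T'. spanning_tree V E T' \<longrightarrow> card T \<le> card T')"

definition degree :: "'a set set \<Rightarrow> 'a \<Rightarrow> nat" where
  "degree E v = card {e\<in>E. v \<in> e}"

definition tsp_tour :: "'a set \<Rightarrow> 'a set set \<Rightarrow> 'a list \<Rightarrow> bool" where
  "tsp_tour V E xs \<longleftrightarrow> walk V E xs \<and> hd xs = last xs \<and> set xs = V"

end

theory Submission
  imports Defs
begin


fun adj :: "'a set set \<Rightarrow> 'a list \<Rightarrow> bool" where
  "adj E (a # b # r) = ({a,b} \<in> E \<and> adj E (b # r))"
| "adj E _ = True"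

lemma adj_nth: "adj E xs \<longleftrightarrow> (\<forall>i. Suc i < length xs \<longrightarrow> {xs ! i, xs ! Suc i} \<in> E)"
proof (induction E xs rule: adj.induct)
  case (1 E a b r)
  show ?case
  proof
    assume h: "adj E (a # b # r)"
    show "\<forall>i. Suc i < length (a # b # r) \<longrightarrow> {(a # b # r) ! i, (a # b # r) ! Suc i} \<in> E"
    proof (intro allI impI)
      fix i assume "Suc i < length (a # b # r)"
      then show "{(a # b # r) ! i, (a # b # r) ! Suc i} \<in> E"
        using h 1 by (cases i) auto
    qed
  next
    assume h: "\<forall>i. Suc i < length (a # b # r) \<longrightarrow> {(a # b # r) ! i, (a # b # r) ! Suc i} \<in> E"
    have "{a,b} \<in> E" using h[rule_format, of 0] by simp
    moreover have "\<forall>i. Suc i < length (b # r) \<longrightarrow> {(b # r) ! i, (b # r) ! Suc i} \<in> E"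
      using h[rule_format, of "Suc _"] by simp
    ultimately show "adj E (a # b # r)" using 1 by simp
  qed
qed auto

lemma walk_adj: "walk V E xs \<longleftrightarrow> xs \<noteq> [] \<and> set xs \<subseteq> V \<and> adj E xs"
  unfolding walk_def adj_nth by simp

lemma adj_Cons: "adj E (x # ys) \<longleftrightarrow> (ys = [] \<or> ({x, hd ys} \<in> E \<and> adj E ys))"
  by (cases ys) auto

lemma adj_append: "adj E (xs @ ys) \<longleftrightarrow> adj E xs \<and> adj E ys \<and> (xs \<noteq> [] \<and> ys \<noteq> [] \<longrightarrow> {last xs, hd ys} \<in> E)"
  by (induction xs) (auto simp: adj_Cons)

lemma adj_rev: "adj E (rev xs) \<longleftrightarrow> adj E xs"
  by (induction xs) (auto simp: adj_append adj_Cons insert_commute hd_rev last_rev)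

lemma walk_append: "walk V E xs \<Longrightarrow> walk V E ys \<Longrightarrow> {last xs, hd ys} \<in> E \<Longrightarrow> walk V E (xs @ ys)"
  by (auto simp: walk_adj adj_append)

lemma walk_Cons: "walk V E ys \<Longrightarrow> {x, hd ys} \<in> E \<Longrightarrow> x \<in> V \<Longrightarrow> walk V E (x # ys)"
  by (auto simp: walk_adj adj_Cons)

lemma walk_rev: "walk V E xs \<Longrightarrow> walk V E (rev xs)"
  by (auto simp: walk_adj adj_rev)

lemma walk_single: "x \<in> V \<Longrightarrow> walk V E [x]"
  by (auto simp: walk_adj)

lemma adj_take: "adj E xs \<Longrightarrow> adj E (take n xs)"
  by (metis adj_append append_take_drop_id)

lemma adj_drop: "adj E xs \<Longrightarrow> adj E (drop n xs)"
  by (metis adj_append append_take_drop_id)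

lemma walk_take: "walk V E xs \<Longrightarrow> 0 < n \<Longrightarrow> walk V E (take n xs)"
  by (auto simp: walk_adj adj_take dest: in_set_takeD)

lemma walk_drop: "walk V E xs \<Longrightarrow> n < length xs \<Longrightarrow> walk V E (drop n xs)"
  by (auto simp: walk_adj adj_drop dest: in_set_dropD)

lemma walk_mono: "walk V E xs \<Longrightarrow> V \<subseteq> V' \<Longrightarrow> E \<subseteq> E' \<Longrightarrow> walk V' E' xs"
  unfolding walk_def by blast

lemma walk_splice:
  assumes "walk V E xs" "xs = a @ s # b" "walk V E ys" "hd ys = s" "last ys = s"
  shows "walk V E (a @ ys @ b) \<and> hd (a @ ys @ b) = hd xs \<and> last (a @ ys @ b) = last xs
     \<and> set (a @ ys @ b) = set xs \<union> set ys \<and> walk_length (a @ ys @ b) = walk_length xs + walk_length ys"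
proof -
  have ys: "ys \<noteq> []" using assms(3) by (simp add: walk_adj)
  have s: "s \<in> set ys" using ys assms(4) by (metis hd_in_set)
  have w: "walk V E (a @ ys @ b)"
    using assms ys unfolding walk_adj
    by (auto simp: adj_append adj_Cons split: if_splits)
  moreover have "hd (a @ ys @ b) = hd xs" using assms ys by (cases a) auto
  moreover have "last (a @ ys @ b) = last xs" using assms ys by (cases b) auto
  moreover have "set (a @ ys @ b) = set xs \<union> set ys" using assms s by auto
  moreover have "walk_length (a @ ys @ b) = walk_length xs + walk_length ys"
    using assms ys by (cases ys) (auto simp: walk_length_def)
  ultimately show ?thesis by blast
qed



inductive ltree :: "'a set set \<Rightarrow> 'a set \<Rightarrow> 'a set set \<Rightarrow> bool" for R where
  base: "ltree R {r} {}"
| step: "ltree R S F \<Longrightarrow> s \<in> S \<Longrightarrow> u \<notin> S \<Longrightarrow> {s,u} \<in> R \<Longrightarrow> ltree R (insert u S) (insert {s,u} F)"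

lemma ltree_basic:
  assumes "ltree R S F"
  shows "finite S \<and> finite F \<and> F \<subseteq> R \<and> (\<forall>e\<in>F. e \<subseteq> S) \<and> S \<noteq> {} \<and> card F + 1 = card S"
  using assms
proof (induction rule: ltree.induct)
  case (base r) then show ?case by simp
next
  case (step S F s u)
  have "{s,u} \<notin> F" using step by blast
  then show ?case using step by auto
qed

lemma ltree_conn:
  assumes "ltree R S F" "a \<in> S" "b \<in> S"
  shows "\<exists>xs. walk S F xs \<and> hd xs = a \<and> last xs = b"
  using assms
proof (induction arbitrary: a b rule: ltree.induct)
  case (base r) then show ?case by (intro exI[of _ "[r]"]) (auto simp: walk_single)
next
  case (step S F s u)
  let ?S = "insert u S" and ?F = "insert {s,u} F"
  have mono: "walk S F xs \<Longrightarrow> walk ?S ?F xs" for xs by (erule walk_mono) auto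
  have su: "{s,u} \<in> ?F" "{u,s} \<in> ?F" by auto
  show ?case
  proof (cases "a = u")
    case True
    show ?thesis
    proof (cases "b = u")
      case True then show ?thesis using \<open>a = u\<close> by (intro exI[of _ "[u]"]) (auto simp: walk_single)
    next
      case False
      then have "b \<in> S" using step by auto
      then obtain xs where xs: "walk S F xs" "hd xs = s" "last xs = b" using step by blast
      have "walk ?S ?F (u # xs)" using mono[OF xs(1)] xs su by (intro walk_Cons) auto
      moreover have "xs \<noteq> []" using xs by (simp add: walk_adj)
      ultimately show ?thesis using xs True by (intro exI[of _ "u # xs"]) auto
    qed
  next
    case False
    then have a: "a \<in> S" using step by auto
    show ?thesis
    proof (cases "b = u")
      case True
      obtain xs where xs: "walk S F xs" "hd xs = a" "last xs = s" using step a by blast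
      have "walk ?S ?F (xs @ [u])" using mono[OF xs(1)] xs su by (intro walk_append) (auto simp: walk_single)
      then show ?thesis using xs True by (intro exI[of _ "xs @ [u]"]) (auto simp: walk_adj)
    next
      case False
      then have "b \<in> S" using step by auto
      then obtain xs where xs: "walk S F xs" "hd xs = a" "last xs = b" using step a by blast
      then show ?thesis using mono by blast
    qed
  qed
qed

lemma cross_list:
  assumes "xs \<noteq> []" "hd xs \<in> S" "last xs \<notin> S"
  shows "\<exists>i. Suc i < length xs \<and> xs ! i \<in> S \<and> xs ! Suc i \<notin> S"
  using assms
proof (induction xs)
  case Nil then show ?case by simp
next
  case (Cons x xs)
  show ?case
  proof (cases "xs = []")
    case True then show ?thesis using Cons by simp
  next
    case False
    show ?thesis
    proof (cases "hd xs \<in> S")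
      case True
      then obtain i where "Suc i < length xs" "xs ! i \<in> S" "xs ! Suc i \<notin> S"
        using Cons False by auto
      then show ?thesis by (intro exI[of _ "Suc i"]) auto
    next
      case False
      then show ?thesis using Cons \<open>xs \<noteq> []\<close>
        by (intro exI[of _ 0]) (auto simp: hd_conv_nth)
    qed
  qed
qed

lemma cross_edge:
  assumes "connected_graph V R" "s0 \<in> S" "S \<subseteq> V" "u0 \<in> V" "u0 \<notin> S"
  shows "\<exists>s u. s \<in> S \<and> u \<in> V \<and> u \<notin> S \<and> {s,u} \<in> R"
proof -
  obtain xs where xs: "walk V R xs" "hd xs = s0" "last xs = u0"
    using assms unfolding connected_graph_def by blast
  then obtain i where i: "Suc i < length xs" "xs ! i \<in> S" "xs ! Suc i \<notin> S"
    using cross_list[of xs S] assms by (auto simp: walk_def)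
  have "xs ! Suc i \<in> V" using xs(1) i(1) unfolding walk_def by (meson nth_mem subsetD)
  moreover have "{xs ! i, xs ! Suc i} \<in> R" using xs(1) i(1) unfolding walk_def by blast
  ultimately show ?thesis using i by blast
qed

lemma ltree_grow:
  assumes "connected_graph V R" "finite V" "ltree R S F" "S \<subseteq> V"
  shows "\<exists>F'. ltree R V F'"
proof -
  have "\<forall>S F. card (V - S) = m \<longrightarrow> ltree R S F \<longrightarrow> S \<subseteq> V \<longrightarrow> (\<exists>F'. ltree R V F')" for m
  proof (induction m)
    case 0
    then show ?case using assms(2) by (metis Diff_eq_empty_iff card_0_eq finite_Diff subset_antisym)
  next
    case (Suc m)
    show ?case
    proof (intro allI impI)
      fix S F assume h: "card (V - S) = Suc m" "ltree R S F" "S \<subseteq> V"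
      obtain s0 where "s0 \<in> S" using ltree_basic[OF h(2)] by blast
      obtain u0 where "u0 \<in> V - S" using h(1) by (metis card.empty ex_in_conv nat.distinct(1))
      then obtain s u where su: "s \<in> S" "u \<in> V" "u \<notin> S" "{s,u} \<in> R"
        using cross_edge[OF assms(1) \<open>s0 \<in> S\<close> h(3)] by blast
      have "ltree R (insert u S) (insert {s,u} F)" using h su by (intro ltree.step)
      moreover have "card (V - insert u S) = m" using h su assms(2)
        by (metis Diff_insert card_Diff_singleton diff_Suc_1 DiffI)
      ultimately show "\<exists>F'. ltree R V F'" using Suc h su by blast
    qed
  qed
  then show ?thesis using assms by blast
qed



lemma walk_distinct:
  assumes "walk V E xs"
  shows "\<exists>ys. walk V E ys \<and> distinct ys \<and> hd ys = hd xs \<and> last ys = last xs"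
  using assms
proof (induction "length xs" arbitrary: xs rule: less_induct)
  case less
  show ?case
  proof (cases "distinct xs")
    case True then show ?thesis using less by blast
  next
    case False
    then obtain i j where ij: "i < j" "j < length xs" "xs ! i = xs ! j"
      by (metis distinct_conv_nth linorder_neqE_nat)
    let ?ys = "take i xs @ drop j xs"
    have ne: "xs \<noteq> []" using less by (simp add: walk_def)
    have d: "walk V E (drop j xs)" using walk_drop less ij by blast
    have hdd: "hd (drop j xs) = xs ! j" using ij by (simp add: hd_drop_conv_nth)
    have w: "walk V E ?ys"
    proof (cases "i = 0")
      case True then show ?thesis using d by simp
    next
      case False
      have t: "walk V E (take i xs)" using walk_take less False by blast
      have "last (take i xs) = xs ! (i - 1)" using False ij by (subst last_conv_nth) (auto simp: min_def)
      moreover have "{xs ! (i-1), xs ! Suc (i-1)} \<in> E"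
        using less(2) ij False unfolding walk_def by (metis Suc_pred' gr0I less_trans)
      ultimately show ?thesis using t d hdd ij False by (intro walk_append) auto
    qed
    have "hd ?ys = hd xs"
    proof (cases "i = 0")
      case True then show ?thesis using hdd ij ne by (simp add: hd_conv_nth)
    next
      case False then show ?thesis using ij ne by (cases xs) auto
    qed
    moreover have "last ?ys = last xs" using ij by simp
    moreover have "length ?ys < length xs" using ij by simp
    ultimately show ?thesis using less w by (metis (no_types, lifting))
  qed
qed

lemma tree_eq:
  assumes "spanning_tree V E T" "graph V E" "ltree T V F"
  shows "T = F"
proof -
  have FT: "F \<subseteq> T" using ltree_basic[OF assms(3)] by blast
  have "e \<in> F" if eT: "e \<in> T" for e
  proof (rule ccontr)
    assume nF: "e \<notin> F"
    have "e \<in> E" using eT assms(1) unfolding spanning_tree_def by blast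
    then have "e \<subseteq> V" "card e = 2" using assms(2) unfolding graph_def by auto
    then obtain a b where ab: "e = {a,b}" "a \<noteq> b" "a \<in> V" "b \<in> V"
      by (metis card_2_iff insert_subset)
    obtain xs where xs: "walk V F xs" "hd xs = a" "last xs = b"
      using ltree_conn[OF assms(3) ab(3,4)] by blast
    obtain ys where ys: "walk V F ys" "distinct ys" "hd ys = a" "last ys = b"
      using walk_distinct[OF xs(1)] xs by auto
    have ne: "ys \<noteq> []" using ys by (simp add: walk_def)
    have l3: "length ys \<ge> 3"
    proof (rule ccontr)
      assume "\<not> 3 \<le> length ys"
      moreover have "length ys \<noteq> 0" using ne by simp
      ultimately consider "length ys = 1" | "length ys = 2" by linarith
      then show False
      proof cases
        case 1 then show False using ys ab by (cases ys) auto
      next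
        case 2
        then obtain p q where "ys = [p,q]" by (cases ys; cases "tl ys") auto
        then show False using ys ab nF unfolding walk_def by auto
      qed
    qed
    have "simple_cycle V T ys"
      unfolding simple_cycle_def using l3 ys walk_mono[OF ys(1) _ FT] eT ab
      by (auto simp: insert_commute)
    then show False using assms(1) unfolding spanning_tree_def acyclic_graph_def by blast
  qed
  then show ?thesis using FT by blast
qed



definition ends :: "'a list \<Rightarrow> 'a set" where "ends w = {hd w, last w}"

definition okW :: "'a set \<Rightarrow> 'a set set \<Rightarrow> 'a set \<Rightarrow> 'a list set \<Rightarrow> bool" where
  "okW V E Od W \<longleftrightarrow> finite W \<and> (\<forall>w\<in>W. walk V E w \<and> hd w \<noteq> last w) \<and>
     (\<forall>w1\<in>W. \<forall>w2\<in>W. w1 \<noteq> w2 \<longrightarrow> ends w1 \<inter> ends w2 = {}) \<and> (\<Union>w\<in>W. ends w) = Od"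

lemma okW_remove:
  assumes "okW V E Od W" "A \<subseteq> W"
  shows "(\<Union>w\<in>W-A. ends w) = Od - (\<Union>w\<in>A. ends w)"
proof
  show "(\<Union>w\<in>W-A. ends w) \<subseteq> Od - (\<Union>w\<in>A. ends w)"
  proof
    fix x assume "x \<in> (\<Union>w\<in>W-A. ends w)"
    then obtain v where v: "v \<in> W" "v \<notin> A" "x \<in> ends v" by blast
    have "x \<in> Od" using assms(1) v unfolding okW_def by blast
    moreover have "x \<notin> ends a" if "a \<in> A" for a
    proof -
      have "a \<in> W" "a \<noteq> v" using that assms(2) v by auto
      then have "ends v \<inter> ends a = {}" using assms(1) v(1) unfolding okW_def by blast
      then show ?thesis using v(3) by blast
    qed
    ultimately show "x \<in> Od - (\<Union>w\<in>A. ends w)" by blast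
  qed
next
  show "Od - (\<Union>w\<in>A. ends w) \<subseteq> (\<Union>w\<in>W-A. ends w)"
    using assms(1) unfolding okW_def by blast
qed

lemma degree_insert:
  assumes "finite F" "e \<notin> F"
  shows "degree (insert e F) v = degree F v + (if v \<in> e then 1 else 0)"
proof -
  have "{x \<in> insert e F. v \<in> x} = (if v \<in> e then insert e {x\<in>F. v \<in> x} else {x\<in>F. v \<in> x})" by auto
  then show ?thesis using assms unfolding degree_def by (simp add: card_insert_if)
qed

lemma degree_out:
  assumes "\<forall>e\<in>F. e \<subseteq> S" "u \<notin> S"
  shows "degree F u = 0"
proof -
  have "{e\<in>F. u \<in> e} = {}" using assms by blast
  then show ?thesis unfolding degree_def by (simp only: card.empty)
qed

lemma orient:
  assumes "walk V E w" "u \<in> ends w"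
  obtains w0 where "walk V E w0" "hd w0 = u" "set w0 = set w" "walk_length w0 = walk_length w"
    "ends w0 = ends w"
proof (cases "hd w = u")
  case True then show ?thesis using that assms by blast
next
  case False
  then have "last w = u" using assms unfolding ends_def by auto
  moreover have "w \<noteq> []" using assms by (simp add: walk_def)
  ultimately show ?thesis using that[of "rev w"] assms walk_rev
    by (auto simp: walk_length_def ends_def hd_rev last_rev)
qed

lemma tree_tour:
  assumes "ltree R S F" "R \<subseteq> E" "S \<subseteq> V" "okW V E {v\<in>S. odd (degree F v)} W"
  shows "\<exists>xs. walk V E xs \<and> hd xs = last xs \<and> S \<union> (\<Union>w\<in>W. set w) \<subseteq> set xs \<and>
     walk_length xs \<le> card F + (\<Sum>w\<in>W. walk_length w)"
  using assms
proof (induction arbitrary: W rule: ltree.induct)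
  case (base r)
  have "W = {}"
  proof (rule ccontr)
    assume "W \<noteq> {}"
    then obtain w where "w \<in> W" by blast
    then have "hd w \<in> (\<Union>w\<in>W. ends w)" unfolding ends_def by blast
    then show False using base(3) unfolding okW_def by (simp add: degree_def)
  qed
  then show ?case using base by (intro exI[of _ "[r]"]) (auto simp: walk_single walk_length_def)
next
  case (step S F s u W)
  let ?S = "insert u S" and ?F = "insert {s,u} F"
  let ?O = "{v\<in>S. odd (degree F v)}" and ?O' = "{v\<in>?S. odd (degree ?F v)}"
  have b: "finite F" "\<forall>e\<in>F. e \<subseteq> S" using ltree_basic[OF step(1)] by auto
  have su: "s \<noteq> u" "{s,u} \<notin> F" "s \<in> V" "u \<in> V" "S \<subseteq> V" "{s,u} \<in> E" using step b by auto
  have dF: "degree ?F v = degree F v + (if v \<in> {s,u} then 1 else 0)" for v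
    using degree_insert[OF b(1) su(2)] by simp
  have du: "degree F u = 0" using degree_out[OF b(2) step(3)] .
  have uO': "u \<in> ?O'" using dF du by simp
  have sO': "s \<in> ?O' \<longleftrightarrow> s \<notin> ?O" using dF step(2) by simp
  have oth: "v \<in> ?O' \<longleftrightarrow> v \<in> ?O" if "v \<noteq> s" "v \<noteq> u" for v using dF that by simp
  have uO: "u \<notin> ?O" using step(3) by simp
  have ok: "okW V E ?O' W" using step by simp
  have finW: "finite W" using ok unfolding okW_def by blast
  obtain w where w: "w \<in> W" "u \<in> ends w" using uO' ok unfolding okW_def by blast
  have ww: "walk V E w" "hd w \<noteq> last w" using w ok unfolding okW_def by auto
  obtain w0 where w0: "walk V E w0" "hd w0 = u" "set w0 = set w" "walk_length w0 = walk_length w"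
    "ends w0 = ends w" using orient[OF ww(1) w(2)] by blast
  define x where "x = last w0"
  have ew: "ends w = {u, x}" using w0 x_def unfolding ends_def by auto
  have xu: "x \<noteq> u" using ww w0 x_def ew unfolding ends_def by auto
  have xO': "x \<in> ?O'" using ok w ew unfolding okW_def by blast
  have sumW: "(\<Sum>w\<in>W. walk_length w) = walk_length w + (\<Sum>w\<in>W-{w}. walk_length w)"
    using finW w(1) by (simp add: sum.remove)
  have cF: "card ?F = card F + 1" using b su by simp
  have uw0: "u \<in> set w0" using w0 by (metis hd_in_set walk_def)
  show ?case
  proof (cases "x = s")
    case True
    have sO: "s \<notin> ?O" using sO' xO' True by blast
    have "okW V E ?O (W - {w})"
    proof -
      have "(\<Union>w\<in>W-{w}. ends w) = ?O' - ends w" using okW_remove[OF ok, of "{w}"] w by simp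
      also have "\<dots> = ?O"
      proof (rule set_eqI)
        fix v show "v \<in> ?O' - ends w \<longleftrightarrow> v \<in> ?O"
        proof (cases "v = s \<or> v = u")
          case True then show ?thesis using ew \<open>x = s\<close> sO uO by blast
        next
          case False then show ?thesis using ew \<open>x = s\<close> oth[of v] by blast
        qed
      qed
      finally show ?thesis using ok unfolding okW_def by auto
    qed
    then obtain xs where xs: "walk V E xs" "hd xs = last xs" "S \<union> (\<Union>w\<in>W-{w}. set w) \<subseteq> set xs"
      "walk_length xs \<le> card F + (\<Sum>w\<in>W-{w}. walk_length w)" using step by blast
    have "s \<in> set xs" using xs step(2) by blast
    then obtain a b where ab: "xs = a @ s # b" by (meson split_list)
    have ys: "walk V E (s # w0)" using w0 su by (intro walk_Cons) (auto simp: insert_commute)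
    have ys2: "hd (s # w0) = s" "last (s # w0) = s" using True x_def w0
      by (auto simp: walk_def)
    note sp = walk_splice[OF xs(1) ab ys ys2]
    have "walk_length (s # w0) = walk_length w0 + 1" using w0 by (cases w0) (auto simp: walk_length_def walk_def)
    then show ?thesis using sp xs w0 sumW cF uw0 w
      by (intro exI[of _ "a @ (s # w0) @ b"]) auto
  next
    case False
    note xs_ne = False
    show ?thesis
    proof (cases "s \<in> ?O'")
      case True
      have sO: "s \<notin> ?O" using sO' True by blast
      obtain w2 where w2: "w2 \<in> W" "s \<in> ends w2" using True ok unfolding okW_def by blast
      have w2w: "w2 \<noteq> w" using w2 ew xs_ne su by auto
      have ww2: "walk V E w2" "hd w2 \<noteq> last w2" using w2 ok unfolding okW_def by auto
      obtain w1 where w1: "walk V E w1" "hd w1 = s" "set w1 = set w2" "walk_length w1 = walk_length w2"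
        "ends w1 = ends w2" using orient[OF ww2(1) w2(2)] by blast
      define y where "y = last w1"
      have ew2: "ends w2 = {s, y}" using w1 y_def unfolding ends_def by auto
      have ys: "y \<noteq> s" using ww2 w1 y_def ew2 unfolding ends_def by auto
      have dis: "ends w \<inter> ends w2 = {}" using ok w w2 w2w unfolding okW_def by blast
      have yO': "y \<in> ?O'" using ok w2 ew2 unfolding okW_def by blast
      have yx: "y \<noteq> x" "y \<noteq> u" using dis ew ew2 by auto
      define nw where "nw = rev w1 @ w0"
      have w1ne: "w1 \<noteq> []" using w1 by (simp add: walk_def)
      have nwW: "walk V E nw" unfolding nw_def using w1 w0 su w1ne
        by (intro walk_append walk_rev) (auto simp: last_rev)
      have ewn: "ends nw = {y, x}" using w1ne w0 x_def y_def unfolding nw_def ends_def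
        by (auto simp: hd_rev walk_def)
      have hdn: "hd nw \<noteq> last nw" using w1ne w0 x_def y_def yx unfolding nw_def
        by (auto simp: hd_rev walk_def)
      have lnw: "walk_length nw = walk_length w1 + walk_length w0 + 1" unfolding nw_def
        using w1ne w0 by (cases w0; cases w1) (auto simp: walk_length_def walk_def)
      let ?W' = "insert nw (W - {w, w2})"
      have rem: "(\<Union>w\<in>W-{w,w2}. ends w) = ?O' - ends w - ends w2"
        using okW_remove[OF ok, of "{w,w2}"] w w2 by auto
      have "okW V E ?O ?W'"
        unfolding okW_def
      proof (intro conjI)
        show "finite ?W'" using finW by simp
        show "\<forall>w\<in>?W'. walk V E w \<and> hd w \<noteq> last w" using ok nwW hdn unfolding okW_def by auto
        show "\<forall>w1\<in>?W'. \<forall>w2\<in>?W'. w1 \<noteq> w2 \<longrightarrow> ends w1 \<inter> ends w2 = {}"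
        proof -
          have "ends v \<inter> ends nw = {}" if "v \<in> W - {w, w2}" for v
          proof -
            have "ends v \<subseteq> ?O' - ends w - ends w2" using rem that by blast
            then show ?thesis using ewn ew ew2 by auto
          qed
          then show ?thesis using ok unfolding okW_def by blast
        qed
        have "(\<Union>w\<in>?W'. ends w) = {y, x} \<union> (?O' - {u, x} - {s, y})"
          using rem ewn ew ew2 by simp
        also have "\<dots> = ?O"
        proof (rule set_eqI)
          fix v show "v \<in> {y, x} \<union> (?O' - {u, x} - {s, y}) \<longleftrightarrow> v \<in> ?O"
          proof (cases "v = s \<or> v = u")
            case True then show ?thesis using xs_ne yx ys xu sO uO by blast
          next
            case False then show ?thesis using xO' yO' oth[of v] oth[of x] oth[of y] xs_ne yx ys xu by blast
          qed
        qed
        finally show "(\<Union>w\<in>?W'. ends w) = ?O" .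
      qed
      then obtain xs where xs: "walk V E xs" "hd xs = last xs" "S \<union> (\<Union>w\<in>?W'. set w) \<subseteq> set xs"
        "walk_length xs \<le> card F + (\<Sum>w\<in>?W'. walk_length w)" using step by blast
      have s1: "(\<Sum>w\<in>?W'. walk_length w) \<le> walk_length nw + (\<Sum>w\<in>W-{w,w2}. walk_length w)"
        using finW by (simp add: sum.insert_if)
      have s2: "(\<Sum>w\<in>W. walk_length w) = walk_length w + walk_length w2 + (\<Sum>w\<in>W-{w,w2}. walk_length w)"
      proof -
        have "(\<Sum>w\<in>W-{w}. walk_length w) = walk_length w2 + (\<Sum>w\<in>W-{w}-{w2}. walk_length w)"
          using finW w2 w2w by (intro sum.remove) auto
        moreover have "W - {w} - {w2} = W - {w,w2}" by auto
        ultimately show ?thesis using sumW by simp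
      qed
      have "set nw = set w1 \<union> set w0" unfolding nw_def by simp
      then have "?S \<union> (\<Union>w\<in>W. set w) \<subseteq> set xs"
        using xs uw0 w0 w1 w w2 by blast
      then show ?thesis using xs s1 s2 lnw w0 w1 cF by (intro exI[of _ xs]) auto
    next
      case False
      have sO: "s \<in> ?O" using sO' False by blast
      define nw where "nw = s # w0"
      have nwW: "walk V E nw" unfolding nw_def using w0 su by (intro walk_Cons) (auto simp: insert_commute)
      have w0ne: "w0 \<noteq> []" using w0 by (simp add: walk_def)
      have ewn: "ends nw = {s, x}" using w0ne x_def unfolding nw_def ends_def by auto
      have hdn: "hd nw \<noteq> last nw" using w0ne x_def xs_ne unfolding nw_def by auto
      have lnw: "walk_length nw = walk_length w0 + 1" unfolding nw_def
        using w0ne by (cases w0) (auto simp: walk_length_def)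
      let ?W' = "insert nw (W - {w})"
      have rem: "(\<Union>w\<in>W-{w}. ends w) = ?O' - ends w"
        using okW_remove[OF ok, of "{w}"] w by auto
      have "okW V E ?O ?W'"
        unfolding okW_def
      proof (intro conjI)
        show "finite ?W'" using finW by simp
        show "\<forall>w\<in>?W'. walk V E w \<and> hd w \<noteq> last w" using ok nwW hdn unfolding okW_def by auto
        show "\<forall>w1\<in>?W'. \<forall>w2\<in>?W'. w1 \<noteq> w2 \<longrightarrow> ends w1 \<inter> ends w2 = {}"
        proof -
          have "ends v \<inter> ends nw = {}" if "v \<in> W - {w}" for v
          proof -
            have "ends v \<subseteq> ?O' - ends w" using rem that by blast
            then show ?thesis using ewn ew False by auto
          qed
          then show ?thesis using ok unfolding okW_def by blast
        qed
        have "(\<Union>w\<in>?W'. ends w) = {s, x} \<union> (?O' - {u, x})"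
          using rem ewn ew by simp
        also have "\<dots> = ?O"
        proof (rule set_eqI)
          fix v show "v \<in> {s, x} \<union> (?O' - {u, x}) \<longleftrightarrow> v \<in> ?O"
          proof (cases "v = s \<or> v = u")
            case True then show ?thesis using xs_ne xu sO uO by blast
          next
            case False then show ?thesis using xO' oth[of v] oth[of x] xs_ne xu by blast
          qed
        qed
        finally show "(\<Union>w\<in>?W'. ends w) = ?O" .
      qed
      then obtain xs where xs: "walk V E xs" "hd xs = last xs" "S \<union> (\<Union>w\<in>?W'. set w) \<subseteq> set xs"
        "walk_length xs \<le> card F + (\<Sum>w\<in>?W'. walk_length w)" using step by blast
      have s1: "(\<Sum>w\<in>?W'. walk_length w) \<le> walk_length nw + (\<Sum>w\<in>W-{w}. walk_length w)"
        using finW by (simp add: sum.insert_if)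
      have "set nw = insert s (set w0)" unfolding nw_def by simp
      then have "?S \<union> (\<Union>w\<in>W. set w) \<subseteq> set xs"
        using xs uw0 w0 w by blast
      then show ?thesis using xs s1 sumW lnw w0 cF by (intro exI[of _ xs]) auto
    qed
  qed
qed



lemma grow_tour:
  assumes "connected_graph V E" "finite V" "walk V E xs" "hd xs = last xs"
  shows "\<exists>ys. walk V E ys \<and> hd ys = last ys \<and> set ys = V \<and>
     walk_length ys \<le> walk_length xs + 2 * card (V - set xs)"
proof -
  have "\<forall>xs. card (V - set xs) = m \<longrightarrow> walk V E xs \<longrightarrow> hd xs = last xs \<longrightarrow>
     (\<exists>ys. walk V E ys \<and> hd ys = last ys \<and> set ys = V \<and>
       walk_length ys \<le> walk_length xs + 2 * card (V - set xs))" for m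
  proof (induction m)
    case 0
    show ?case
    proof (intro allI impI)
      fix xs assume h: "card (V - set xs) = 0" "walk V E xs" "hd xs = last xs"
      have "V - set xs = {}" using h(1) assms(2) by simp
      moreover have "set xs \<subseteq> V" using h(2) by (simp add: walk_def)
      ultimately have "set xs = V" by blast
      then show "\<exists>ys. walk V E ys \<and> hd ys = last ys \<and> set ys = V \<and>
       walk_length ys \<le> walk_length xs + 2 * card (V - set xs)" using h by (intro exI[of _ xs]) simp
    qed
  next
    case (Suc m)
    show ?case
    proof (intro allI impI)
      fix xs assume h: "card (V - set xs) = Suc m" "walk V E xs" "hd xs = last xs"
      have ne: "xs \<noteq> []" "set xs \<subseteq> V" using h(2) by (auto simp: walk_def)
      obtain u0 where u0: "u0 \<in> V - set xs" using h(1) by (metis card.empty ex_in_conv nat.distinct(1))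
      obtain s u where su: "s \<in> set xs" "u \<in> V" "u \<notin> set xs" "{s,u} \<in> E"
        using cross_edge[OF assms(1) hd_in_set[OF ne(1)] ne(2)] u0 by blast
      obtain a b where ab: "xs = a @ s # b" using su(1) by (meson split_list)
      have sV: "s \<in> V" using su ne by blast
      have yw: "walk V E [s,u,s]" using su sV
        by (intro walk_Cons walk_single) (auto simp: insert_commute)
      note sp = walk_splice[OF h(2) ab yw]
      let ?xs = "a @ [s,u,s] @ b"
      have c: "card (V - set ?xs) = m"
      proof -
        have "set ?xs = insert u (set xs)" using sp su by auto
        then have "V - set ?xs = (V - set xs) - {u}" by auto
        then show ?thesis using h(1) su assms(2) by simp
      qed
      have l: "walk_length [s,u,s] = 2" by (simp add: walk_length_def)
      obtain ys where "walk V E ys" "hd ys = last ys" "set ys = V"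
        "walk_length ys \<le> walk_length ?xs + 2 * card (V - set ?xs)"
        using Suc[rule_format, OF c] sp h by auto
      then show "\<exists>ys. walk V E ys \<and> hd ys = last ys \<and> set ys = V \<and>
       walk_length ys \<le> walk_length xs + 2 * card (V - set xs)"
        using sp c h(1) l by (intro exI[of _ ys]) auto
    qed
  qed
  then show ?thesis using assms by blast
qed

fun pairup :: "'b list \<Rightarrow> ('b \<times> 'b) list" where
  "pairup (a # b # r) = (a, b) # pairup r"
| "pairup _ = []"

definition flat :: "('b \<times> 'b) list \<Rightarrow> 'b list" where
  "flat P = concat (map (\<lambda>(a,b). [a,b]) P)"

lemma flat_simps [simp]: "flat [] = []" "flat ((a,b) # P) = a # b # flat P"
  by (auto simp: flat_def)

lemma flat_pairup: "flat (pairup xs) = (if even (length xs) then xs else butlast xs)"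
  by (induction xs rule: pairup.induct) auto

lemma pairup_lt: "(a,b) \<in> set (pairup xs) \<Longrightarrow> sorted_wrt (<) xs \<Longrightarrow> (a::nat) < b"
  by (induction xs rule: pairup.induct) auto

lemma pairup_sum:
  assumes "sorted (xs::nat list)" "xs \<noteq> []"
  shows "(\<Sum>(a,b)\<leftarrow>pairup xs. b - a) + (\<Sum>(a,b)\<leftarrow>pairup (tl xs). b - a) = last xs - hd xs"
  using assms
proof (induction xs)
  case Nil then show ?case by simp
next
  case (Cons x xs)
  show ?case
  proof (cases xs)
    case Nil then show ?thesis by simp
  next
    case (Cons y r)
    have IH: "(\<Sum>(a,b)\<leftarrow>pairup (y#r). b - a) + (\<Sum>(a,b)\<leftarrow>pairup r. b - a) = last (y#r) - y"
      using Cons.IH Cons.prems Cons by simp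
    have "x \<le> y" "y \<le> last (y#r)" using Cons.prems Cons by auto
    then show ?thesis using IH Cons by simp
  qed
qed

definition seg :: "'a list \<Rightarrow> nat \<Rightarrow> nat \<Rightarrow> 'a list" where
  "seg C a b = take (b - a + 1) (drop a C)"

lemma seg_props:
  assumes "walk V E C" "a < b" "b < length C"
  shows "walk V E (seg C a b) \<and> hd (seg C a b) = C ! a \<and> last (seg C a b) = C ! b \<and>
    walk_length (seg C a b) = b - a"
proof -
  have w: "walk V E (seg C a b)" unfolding seg_def using assms
    by (intro walk_take walk_drop) auto
  have l: "length (seg C a b) = b - a + 1" unfolding seg_def using assms by auto
  have "hd (seg C a b) = C ! a" unfolding seg_def using assms
    by (simp add: hd_take hd_drop_conv_nth)
  moreover have "last (seg C a b) = C ! b" unfolding seg_def using assms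
    by (simp add: last_conv_nth)
  ultimately show ?thesis using w l by (simp add: walk_length_def)
qed

lemma okW_empty: "okW V E {} {}" by (simp add: okW_def)

lemma okW_insert:
  assumes "okW V E Od W" "walk V E w" "hd w \<noteq> last w" "ends w \<inter> Od = {}"
  shows "okW V E (ends w \<union> Od) (insert w W)"
proof -
  have "w \<notin> W"
  proof
    assume "w \<in> W"
    then have "ends w \<subseteq> Od" using assms(1) unfolding okW_def by blast
    then show False using assms(4) unfolding ends_def by blast
  qed
  have "\<forall>v\<in>W. ends v \<inter> ends w = {}" using assms(1,4) unfolding okW_def by blast
  then show ?thesis using assms \<open>w \<notin> W\<close> unfolding okW_def by (auto simp: Int_commute)
qed

lemma segs_ok:
  assumes "walk V E C" "distinct C" "distinct (flat P)"
    "\<forall>(a,b)\<in>set P. a < b \<and> b < length C"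
  shows "okW V E ((!) C ` set (flat P)) ((\<lambda>(a,b). seg C a b) ` set P) \<and>
    (\<Sum>w\<in>(\<lambda>(a,b). seg C a b) ` set P. walk_length w) \<le> (\<Sum>(a,b)\<leftarrow>P. b - a)"
  using assms(3,4)
proof (induction P)
  case Nil then show ?case by (simp add: okW_empty)
next
  case (Cons p P)
  obtain a b where p: "p = (a,b)" by (cases p)
  have ab: "a < b" "b < length C" using Cons.prems p by auto
  have IH: "okW V E ((!) C ` set (flat P)) ((\<lambda>(a,b). seg C a b) ` set P)"
    "(\<Sum>w\<in>(\<lambda>(a,b). seg C a b) ` set P. walk_length w) \<le> (\<Sum>(a,b)\<leftarrow>P. b - a)"
    using Cons p by auto
  note sp = seg_props[OF assms(1) ab]
  have fl: "\<forall>i\<in>set (flat P). i < length C"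
    using Cons.prems by (auto simp: flat_def)
  have "a \<notin> set (flat P)" "b \<notin> set (flat P)" using Cons.prems p by auto
  then have disj: "ends (seg C a b) \<inter> (!) C ` set (flat P) = {}"
    using sp ab fl assms(2) unfolding ends_def by (auto simp: nth_eq_iff_index_eq)
  have hl: "hd (seg C a b) \<noteq> last (seg C a b)" using sp ab assms(2) by (simp add: nth_eq_iff_index_eq)
  have "okW V E (ends (seg C a b) \<union> (!) C ` set (flat P)) (insert (seg C a b) ((\<lambda>(a,b). seg C a b) ` set P))"
    using okW_insert[OF IH(1) _ hl disj] sp by blast
  moreover have "ends (seg C a b) \<union> (!) C ` set (flat P) = (!) C ` set (flat (p # P))"
    using sp p unfolding ends_def by auto
  moreover have "(\<Sum>w\<in>insert (seg C a b) ((\<lambda>(a,b). seg C a b) ` set P). walk_length w)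
      \<le> walk_length (seg C a b) + (\<Sum>w\<in>(\<lambda>(a,b). seg C a b) ` set P. walk_length w)"
    by (simp add: sum.insert_if)
  ultimately show ?case using IH(2) sp p by auto
qed



lemma ltree_even:
  assumes "ltree R S F"
  shows "even (card {v\<in>S. odd (degree F v)})"
  using assms
proof (induction rule: ltree.induct)
  case (base r) then show ?case by (simp add: degree_def)
next
  case (step S F s u)
  let ?O = "{v\<in>S. odd (degree F v)}" and ?O' = "{v\<in>insert u S. odd (degree (insert {s,u} F) v)}"
  have b: "finite F" "\<forall>e\<in>F. e \<subseteq> S" "finite S" using ltree_basic[OF step(1)] by auto
  have ne: "{s,u} \<notin> F" "s \<noteq> u" using b step by auto
  have dF: "degree (insert {s,u} F) v = degree F v + (if v \<in> {s,u} then 1 else 0)" for v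
    using degree_insert[OF b(1) ne(1)] by simp
  have du: "degree F u = 0" using degree_out[OF b(2) step(3)] .
  have fO: "finite ?O" using b by simp
  have uO: "u \<notin> ?O" using step(3) by simp
  show ?case
  proof (cases "s \<in> ?O")
    case True
    have "?O' = insert u (?O - {s})"
    proof (rule set_eqI)
      fix v show "v \<in> ?O' \<longleftrightarrow> v \<in> insert u (?O - {s})"
        using dF[of v] du True ne step(2,3) by (cases "v = s \<or> v = u") auto
    qed
    moreover have "card ?O > 0" using fO True card_gt_0_iff by blast
    ultimately have "card ?O' = card ?O" using fO uO True by (simp add: card_Diff_singleton)
    then show ?thesis using step by simp
  next
    case False
    have "?O' = insert u (insert s ?O)"
    proof (rule set_eqI)
      fix v show "v \<in> ?O' \<longleftrightarrow> v \<in> insert u (insert s ?O)"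
        using dF[of v] du False ne step(2,3) by (cases "v = s \<or> v = u") auto
    qed
    then have "card ?O' = card ?O + 2" using fO uO False ne by simp
    then show ?thesis using step by simp
  qed
qed

lemma flat_mem: "(a,b) \<in> set P \<Longrightarrow> a \<in> set (flat P) \<and> b \<in> set (flat P)"
  by (induction P) auto

lemma cyc_join:
  assumes C: "simple_cycle V E C" and sub: "Od \<subseteq> set C" and ev: "even (card Od)"
  shows "\<exists>W. okW V E Od W \<and> 2 * (\<Sum>w\<in>W. walk_length w) \<le> length C"
proof -
  define k where "k = length C"
  have wC: "walk V E C" "distinct C" "{last C, hd C} \<in> E" "k \<ge> 3"
    using C unfolding simple_cycle_def k_def by auto
  define I where "I = {i. i < k \<and> C ! i \<in> Od}"
  have fI: "finite I" unfolding I_def by simp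
  define ps where "ps = sorted_list_of_set I"
  have ps: "sorted_wrt (<) ps" "set ps = I" "length ps = card I"
    unfolding ps_def using fI by (auto simp: strict_sorted_list_of_set)
  have psd: "distinct ps" "sorted ps" using ps(1) strict_sorted_iff by auto
  have img: "(!) C ` I = Od"
  proof
    show "(!) C ` I \<subseteq> Od" unfolding I_def by auto
    show "Od \<subseteq> (!) C ` I"
    proof
      fix v assume "v \<in> Od"
      then obtain i where "i < k" "C ! i = v" using sub unfolding k_def by (metis in_set_conv_nth subsetD)
      then show "v \<in> (!) C ` I" unfolding I_def using \<open>v \<in> Od\<close> by auto
    qed
  qed
  have inj: "inj_on ((!) C) {i. i < k}" using wC(2) unfolding k_def
    by (auto simp: inj_on_def nth_eq_iff_index_eq)
  have Ik: "I \<subseteq> {i. i < k}" unfolding I_def by auto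
  have "card I = card Od" using img card_image[OF inj_on_subset[OF inj Ik]] by simp
  then have evps: "even (length ps)" using ps ev by simp
  have Odps: "Od = (!) C ` set ps" using img ps by simp
  have psk: "\<forall>i\<in>set ps. i < k" using ps Ik by auto
  show ?thesis
  proof (cases "ps = []")
    case True
    then have "Od = {}" using Odps by simp
    then show ?thesis using okW_empty by fastforce
  next
    case False
    have l2: "length ps \<ge> 2"
    proof -
      have "length ps \<noteq> 0" using False by simp
      moreover have "length ps \<noteq> 1" using evps by (metis odd_one)
      ultimately show ?thesis by linarith
    qed
    define h where "h = hd ps"
    define l where "l = last ps"
    obtain mid where mid: "ps = h # mid @ [l]" using l2 unfolding h_def l_def
      by (cases ps; cases "tl ps" rule: rev_cases) auto
    have tlps: "tl ps = mid @ [l]" using mid by (metis list.sel(3))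
    have hl: "h < l" using ps(1) mid by (simp add: sorted_wrt_append)
    have lk: "l < k" using psk mid by auto
    have hnot: "h \<notin> set mid" "l \<notin> set mid" using psd(1) mid by auto
    define P1 where "P1 = pairup ps"
    have f1: "flat P1 = ps" unfolding P1_def using evps flat_pairup[of ps] by presburger
    have p1: "\<forall>(a,b)\<in>set P1. a < b \<and> b < length C"
    proof -
      have "a < b \<and> b < length C" if ab: "(a,b) \<in> set P1" for a b
      proof -
        have "a < b" using pairup_lt[OF ab[unfolded P1_def] ps(1)] .
        moreover have "b \<in> set ps" using flat_mem[OF ab] f1 by simp
        ultimately show ?thesis using psk k_def by auto
      qed
      then show ?thesis by auto
    qed
    have d1: "distinct (flat P1)" using f1 psd by simp
    define W1 where "W1 = (\<lambda>(a,b). seg C a b) ` set P1"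
    have S1: "okW V E ((!) C ` set (flat P1)) W1 \<and> (\<Sum>w\<in>W1. walk_length w) \<le> (\<Sum>(a,b)\<leftarrow>P1. b - a)"
      unfolding W1_def using segs_ok[OF wC(1,2) d1 p1] .
    have W1: "okW V E Od W1" "(\<Sum>w\<in>W1. walk_length w) \<le> (\<Sum>(a,b)\<leftarrow>P1. b - a)"
      using S1 f1 Odps by auto
    define P2 where "P2 = pairup (tl ps)"
    have em: "even (length mid)" using evps by (subst (asm) mid) simp
    have f2: "flat P2 = mid" unfolding P2_def using em flat_pairup[of "tl ps"] tlps by simp
    have stl: "sorted_wrt (<) (tl ps)" using ps(1) by (cases ps) auto
    have p2: "\<forall>(a,b)\<in>set P2. a < b \<and> b < length C"
    proof -
      have "a < b \<and> b < length C" if ab: "(a,b) \<in> set P2" for a b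
      proof -
        have "a < b" using pairup_lt[OF ab[unfolded P2_def] stl] .
        moreover have "b \<in> set mid" using flat_mem[OF ab] f2 by simp
        ultimately show ?thesis using psk k_def mid by auto
      qed
      then show ?thesis by auto
    qed
    have dmid: "distinct mid" using psd(1) mid by simp
    have d2: "distinct (flat P2)" using f2 dmid by simp
    define W2 where "W2 = (\<lambda>(a,b). seg C a b) ` set P2"
    have S2: "okW V E ((!) C ` set (flat P2)) W2 \<and> (\<Sum>w\<in>W2. walk_length w) \<le> (\<Sum>(a,b)\<leftarrow>P2. b - a)"
      unfolding W2_def using segs_ok[OF wC(1,2) d2 p2] .
    have W2: "okW V E ((!) C ` set mid) W2" "(\<Sum>w\<in>W2. walk_length w) \<le> (\<Sum>(a,b)\<leftarrow>P2. b - a)"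
      using S2 f2 by auto
    define wr where "wr = drop l C @ take (h+1) C"
    have Cne: "C \<noteq> []" using wC(4) k_def by auto
    have wrw: "walk V E wr" unfolding wr_def using wC lk Cne unfolding k_def
      by (intro walk_append walk_drop walk_take) (auto simp: hd_take)
    have hwr: "hd wr = C ! l" unfolding wr_def using lk k_def by (simp add: hd_drop_conv_nth)
    have lt: "last (take (h+1) C) = C ! h" using hl lk k_def by (subst last_conv_nth) (auto simp: min_def)
    have lwr: "last wr = C ! h" unfolding wr_def using lt Cne by (simp add: last_append del: take_Suc)
    have hlwr: "hd wr \<noteq> last wr" using hwr lwr hl lk wC(2) k_def by (simp add: nth_eq_iff_index_eq)
    have midk: "\<forall>i\<in>set mid. i < k" using psk mid by auto
    have nl: "C ! l \<notin> (!) C ` set mid"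
    proof
      assume "C ! l \<in> (!) C ` set mid"
      then obtain i where "i \<in> set mid" "C ! l = C ! i" by blast
      then have "i = l" using midk lk wC(2) k_def by (simp add: nth_eq_iff_index_eq)
      then show False using hnot \<open>i \<in> set mid\<close> by simp
    qed
    have nh: "C ! h \<notin> (!) C ` set mid"
    proof
      assume "C ! h \<in> (!) C ` set mid"
      then obtain i where "i \<in> set mid" "C ! h = C ! i" by blast
      then have "i = h" using midk lk hl wC(2) k_def by (simp add: nth_eq_iff_index_eq)
      then show False using hnot \<open>i \<in> set mid\<close> by simp
    qed
    have dis: "ends wr \<inter> (!) C ` set mid = {}"
      using nl nh unfolding ends_def hwr lwr by auto
    have okwr: "okW V E (ends wr \<union> (!) C ` set mid) (insert wr W2)"
      using okW_insert[OF W2(1) wrw hlwr dis] .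
    have "ends wr \<union> (!) C ` set mid = Od" using hwr lwr Odps mid unfolding ends_def by auto
    then have ok2: "okW V E Od (insert wr W2)" using okwr by simp
    have lenwr: "walk_length wr = k - l + h" unfolding wr_def walk_length_def using lk hl k_def by simp
    have s2: "(\<Sum>w\<in>insert wr W2. walk_length w) \<le> walk_length wr + (\<Sum>w\<in>W2. walk_length w)"
      using W2(1) unfolding okW_def by (simp add: sum.insert_if)
    have tot: "(\<Sum>(a,b)\<leftarrow>P1. b - a) + (\<Sum>(a,b)\<leftarrow>P2. b - a) = l - h"
      using pairup_sum[OF psd(2) False] unfolding P1_def P2_def h_def l_def by simp
    have "(\<Sum>w\<in>W1. walk_length w) + (\<Sum>w\<in>insert wr W2. walk_length w) \<le> k"
      using W1(2) W2(2) s2 tot lenwr hl lk by linarith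
    then show ?thesis unfolding k_def using W1(1) ok2
      by (cases "2 * (\<Sum>w\<in>W1. walk_length w) \<le> length C") auto
  qed
qed



theorem theorem1:
  fixes V :: "'a set" and E :: "'a set set" and T :: "'a set set" and C :: "'a list"
  assumes "graph V E"
    and "two_vertex_connected V E"
    and "min_spanning_tree V E T"
    and "simple_cycle V E C"
    and "{v \<in> V. odd (degree T v)} \<subseteq> set C"
  shows "\<exists>xs. tsp_tour V E xs \<and> real (walk_length xs) \<le> 4 * real (card V) / 3"
proof -
  have fV: "finite V" using assms(1) unfolding graph_def by blast
  have cE: "connected_graph V E" "card V > 2" using assms(2) unfolding two_vertex_connected_def by auto
  have st: "spanning_tree V E T" using assms(3) unfolding min_spanning_tree_def by blast
  have TE: "T \<subseteq> E" "connected_graph V T" using st unfolding spanning_tree_def by auto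
  obtain r where r: "r \<in> V" using cE(2) by (metis card.empty ex_in_conv not_less0)
  obtain F where F: "ltree T V F" using ltree_grow[OF TE(2) fV ltree.base[of T r]] r by auto
  have TF: "T = F" using tree_eq[OF st assms(1) F] .
  have ltT: "ltree T V T" using F TF by simp
  have cT: "card T + 1 = card V" using ltree_basic[OF ltT] by blast
  define n where "n = card V"
  define k where "k = length C"
  have wC: "walk V E C" "distinct C" "{last C, hd C} \<in> E" "k \<ge> 3"
    using assms(4) unfolding simple_cycle_def k_def by auto
  have Cne: "C \<noteq> []" using wC(4) k_def by auto
  have CV: "set C \<subseteq> V" using wC(1) by (simp add: walk_def)
  have kn: "k \<le> n" unfolding k_def n_def using CV fV wC(2)
    by (metis card_mono distinct_card)
  show ?thesis
  proof (cases "3 * k \<ge> 2 * n")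
    case True
    define xs0 where "xs0 = C @ [hd C]"
    have w0: "walk V E xs0" unfolding xs0_def using wC Cne CV
      by (intro walk_append walk_single) auto
    have h0: "hd xs0 = last xs0" unfolding xs0_def using Cne by simp
    have l0: "walk_length xs0 = k" unfolding xs0_def walk_length_def k_def by simp
    have s0: "set xs0 = set C" unfolding xs0_def using Cne by auto
    obtain ys where ys: "walk V E ys" "hd ys = last ys" "set ys = V"
      "walk_length ys \<le> walk_length xs0 + 2 * card (V - set xs0)"
      using grow_tour[OF cE(1) fV w0 h0] by blast
    have "card (V - set C) = n - k" unfolding n_def k_def using CV fV wC(2)
      by (simp add: card_Diff_subset distinct_card)
    then have "walk_length ys \<le> k + 2 * (n - k)" using ys(4) l0 s0 by simp
    moreover have "real (k + 2 * (n - k)) = real k + 2 * (real n - real k)" using kn by (simp add: of_nat_diff)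
    ultimately have "real (walk_length ys) \<le> real k + 2 * (real n - real k)"
      by (metis of_nat_le_iff)
    also have "\<dots> \<le> 4 * real n / 3"
    proof -
      have "2 * real n \<le> 3 * real k" using True by (metis of_nat_le_iff of_nat_mult of_nat_numeral)
      then show ?thesis by (simp add: field_simps)
    qed
    finally show ?thesis using ys unfolding tsp_tour_def n_def by blast
  next
    case False
    have ev: "even (card {v \<in> V. odd (degree T v)})" using ltree_even[OF ltT] .
    obtain W where W: "okW V E {v \<in> V. odd (degree T v)} W" "2 * (\<Sum>w\<in>W. walk_length w) \<le> length C"
      using cyc_join[OF assms(4) assms(5) ev] by blast
    obtain xs where xs: "walk V E xs" "hd xs = last xs" "V \<union> (\<Union>w\<in>W. set w) \<subseteq> set xs"
      "walk_length xs \<le> card T + (\<Sum>w\<in>W. walk_length w)"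
      using tree_tour[OF ltT TE(1) subset_refl W(1)] by blast
    have "set xs = V" using xs(1,3) unfolding walk_def by blast
    have "2 * walk_length xs \<le> 2 * (n - 1) + k" using xs(4) W(2) cT n_def k_def by linarith
    then have "3 * walk_length xs \<le> 4 * n" using False cT n_def by linarith
    then have "3 * real (walk_length xs) \<le> 4 * real n" by (metis of_nat_le_iff of_nat_mult of_nat_numeral)
    then have "real (walk_length xs) \<le> 4 * real n / 3" by (simp add: field_simps)
    then show ?thesis using xs \<open>set xs = V\<close> unfolding tsp_tour_def n_def by blast
  qed
qed

end
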